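(* Suppose that $k<n$ are positive reals and $t\le a$ are positive integers such that $a,t=\alpha_0(n)+O(1)$ and $2\le n/k=t-\Theta(1)$. Then, with $\rho=n/k$, \[ \hat L_0(n,k,t)=\Big(a-\rho-1-\frac{2}{\log2}\Big)(\log n-\log\log n)+\log\mu_a(n)+O(1). \]
   Context: $\alpha_0(n)=2\log_2 n-2\log_2\log_2 n+2\log_2(e/2)+1$, $\mu_a(n)=\binom na2^{-\binom a2}$, $d_i=2^{\binom i2}i!$. For positive integer $t$ and reals $\rho\in(1,t)$, $k>0$: $\tilde L_0(\rho,k,t)=\sup\{\rho\log(\rho k)-\log k-\rho+1-\sum_{i=1}^tp_i\log(p_id_i)\}$, the supremum over $(p_i)_{i=1}^t\in[0,1]^t$ with $\sum_ip_i=1$, $\sum_iip_i=\rho$ (with $0\log0=0$); and $\hat L_0(n,k,t)=\tilde L_0(n/k,k,t)$. Logarithms are natural; asymptotics are as $n\to\infty$ with the implicit constants in the hypotheses fixed. *)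

theory Defs
  imports "HOL-Analysis.Analysis"
begin

definition alpha0 :: "real \<Rightarrow> real" where
  "alpha0 n = 2 * log 2 n - 2 * log 2 (log 2 n) + 2 * log 2 (exp 1 / 2) + 1"

definition mu :: "nat \<Rightarrow> real \<Rightarrow> real" where
  "mu a n = (n gchoose a) * 2 powr (- real (a choose 2))"

definition dcoef :: "nat \<Rightarrow> real" where
  "dcoef i = 2 ^ (i choose 2) * fact i"

definition plogpd :: "real \<Rightarrow> real \<Rightarrow> real" where
  "plogpd p d = (if p = 0 then 0 else p * ln (p * d))"

definition L0tilde :: "real \<Rightarrow> real \<Rightarrow> nat \<Rightarrow> real" where
  "L0tilde \<rho> k t = Sup {\<rho> * ln (\<rho> * k) - ln k - \<rho> + 1 - (\<Sum>i=1..t. plogpd (p i) (dcoef i)) | p.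
       (\<forall>i\<in>{1..t}. 0 \<le> p i \<and> p i \<le> 1) \<and> (\<Sum>i=1..t. p i) = 1 \<and> (\<Sum>i=1..t. real i * p i) = \<rho>}"

definition L0hat :: "real \<Rightarrow> real \<Rightarrow> nat \<Rightarrow> real" where
  "L0hat n k t = L0tilde (n / k) k t"

end

theory Submission
  imports Defs "HOL-Real_Asymp.Real_Asymp"
begin


lemma real_choose2: "real (n choose 2) = real n * (real n - 1) / 2"
proof -
  have "real (n choose 2) = (real n gchoose 2)" by (simp add: binomial_gbinomial)
  also have "\<dots> = real n * (real n - 1) / 2"
    by (simp add: gbinomial_prod_rev numeral_2_eq_2 prod.atLeast0_lessThan_Suc)
  finally show ?thesis .
qed

lemma dcoef_pos: "dcoef i > 0" by (simp add: dcoef_def)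

lemma ln_dcoef: "ln (dcoef i) = real (i choose 2) * ln 2 + ln (fact i)"
  by (simp add: dcoef_def ln_mult ln_realpow)

lemma fact_lo: "fact m * (m+1)^j \<le> (fact (m+j) :: nat)"
proof (induction j)
  case 0 then show ?case by simp
next
  case (Suc j)
  have "fact m * (m+1)^Suc j = (m+1) * (fact m * (m+1)^j)" by (metis mult.left_commute power_Suc)
  also have "\<dots> \<le> (m+j+1) * fact (m+j)" using Suc by (intro mult_mono) auto
  also have "\<dots> = fact (m + Suc j)" by simp
  finally show ?case .
qed

lemma fact_hi: "fact (i+j) \<le> fact i * ((i+j)^j :: nat)"
proof (induction j)
  case 0 then show ?case by simp
next
  case (Suc j)
  have "fact (i + Suc j) = (i+j+1) * fact (i+j)" by simp
  also have "\<dots> \<le> (i+j+1) * (fact i * (i+j)^j)" using Suc by (intro mult_left_mono) auto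
  also have "\<dots> \<le> (i+j+1) * (fact i * (i+j+1)^j)" by (intro mult_mono power_mono) auto
  also have "\<dots> = fact i * (i + Suc j)^Suc j" by (simp add: mult.left_commute)
  finally show ?case .
qed

lemma ln_fact_convex: "ln (fact i) - ln (fact m) \<ge> (real i - real m) * ln (real m + 1)"
proof (cases "m \<le> i")
  case True
  then obtain j where i: "i = m + j" using le_Suc_ex by blast
  have "fact m * (m+1)^j \<le> fact i" using fact_lo[of m j] i by simp
  then have "real (fact m * (m+1)^j) \<le> real (fact i)" by (simp only: of_nat_le_iff)
  then have "fact m * (real m+1)^j \<le> (fact i :: real)" by (simp add: add.commute)
  then have "ln (fact m * (real m+1)^j) \<le> ln (fact i :: real)"
    by (subst ln_le_cancel_iff) auto
  then show ?thesis using i by (simp add: ln_mult ln_realpow)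
next
  case False
  then obtain j where m: "m = i + j" using le_Suc_ex nat_le_linear by blast
  have "fact m \<le> fact i * m^j" using fact_hi[of i j] m by simp
  then have "real (fact m) \<le> real (fact i * m^j)" by (simp only: of_nat_le_iff)
  then have "fact m \<le> (fact i * real m^j :: real)" by simp
  also have "\<dots> \<le> fact i * (real m + 1)^j" by (intro mult_left_mono power_mono) auto
  finally have "ln (fact m :: real) \<le> ln (fact i * (real m + 1)^j)"
    by (subst ln_le_cancel_iff) auto
  then show ?thesis using m by (simp add: ln_mult ln_realpow algebra_simps)
qed

lemma ln_dcoef_convex:
  "ln (dcoef i) \<ge> ln (dcoef m) + (real i - real m) * (real m * ln 2 + ln (real m + 1))
      + (real i - real m) * (real i - real m - 1) / 2 * ln 2"
proof -
  have e: "real (i choose 2) * ln 2 = real (m choose 2) * ln 2 + (real i - real m) * (real m * ln 2)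
      + (real i - real m) * (real i - real m - 1) / 2 * ln 2"
    unfolding real_choose2 by (simp add: field_simps)
  have d: "(real i - real m) * (real m * ln 2 + ln (real m + 1)) = (real i - real m) * (real m * ln 2) + (real i - real m) * ln (real m + 1)"
    by (simp add: distrib_left)
  show ?thesis unfolding ln_dcoef using e d ln_fact_convex[of i m] by linarith
qed

lemma int_ineq: "(j::int) * (j - 1) \<ge> 2 * \<bar>j\<bar> - 2"
proof (cases "j \<ge> 3")
  case True
  then have "j * j \<ge> 3 * j" using mult_right_mono[of 3 j j] by auto
  moreover have "j*(j-1) = j*j - j" by (simp add: right_diff_distrib)
  moreover have "\<bar>j\<bar> = j" using True by simp
  ultimately show ?thesis using True by linarith
next
  case False
  show ?thesis
  proof (cases "j \<le> -1")
    case True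
    then have "(-j) * (-j - 1) \<ge> 0" by (intro mult_nonneg_nonneg) auto
    then show ?thesis using True by (simp add: algebra_simps)
  next
    case False
    with \<open>\<not> j \<ge> 3\<close> have "j = 0 \<or> j = 1 \<or> j = 2" by auto
    then show ?thesis by auto
  qed
qed

lemma real_ineq: "(real i - real m) * (real i - real m - 1) / 2 \<ge> \<bar>real i - real m\<bar> - 1"
proof -
  have h: "of_int ((int i - int m) * (int i - int m - 1)) \<ge> (of_int (2*\<bar>int i - int m\<bar> - 2) :: real)"
    using int_ineq of_int_le_iff by blast
  then have "(real i - real m) * (real i - real m - 1) \<ge> 2*\<bar>real i - real m\<bar> - 2" by simp
  moreover have "\<And>x y::real. 2*y - 2 \<le> x \<Longrightarrow> y - 1 \<le> x/2" by linarith
  ultimately show ?thesis by blast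
qed

lemma gibbs_term:
  assumes "0 \<le> p" "0 < u" "0 < d"
  shows "plogpd p d \<ge> p * ln (u * d) + p - u"
proof (cases "p = 0")
  case True then show ?thesis using assms by (simp add: plogpd_def)
next
  case False
  then have p: "p > 0" using assms by simp
  have "ln (u / p) \<le> u / p - 1" using ln_le_minus_one[of "u/p"] p assms by simp
  then have "p * ln (u / p) \<le> u - p" using p by (simp add: field_simps)
  moreover have "ln (p * d) = ln (u * d) - ln (u / p)" using p assms
    by (simp add: ln_mult ln_div)
  then have "p * ln (p * d) = p * ln (u * d) - p * ln (u / p)" by (simp add: right_diff_distrib)
  ultimately show ?thesis using False by (simp add: plogpd_def)
qed



definition gw :: "nat \<Rightarrow> nat \<Rightarrow> real" where
  "gw m t = (if t \<le> m then 2 powr (real t - real m + 1) else 3 - 2 powr (real m - real t))"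

lemma weight_sum_g: "(\<Sum>i=1..t. 2 powr (- \<bar>real i - real m\<bar>)) \<le> gw m t"
proof (induction t)
  case 0 then show ?case by (simp add: gw_def)
next
  case (Suc t)
  have s: "(\<Sum>i=1..Suc t. 2 powr (- \<bar>real i - real m\<bar>)) = (\<Sum>i=1..t. 2 powr (- \<bar>real i - real m\<bar>)) + 2 powr (- \<bar>real t + 1 - real m\<bar>)"
    by (simp add: sum.cl_ivl_Suc add.commute)
  show ?case
  proof (cases "Suc t \<le> m")
    case True
    then have "gw m t = 2 powr (real t - real m + 1)" "\<bar>real t + 1 - real m\<bar> = real m - real t - 1"
      by (auto simp: gw_def)
    moreover have "gw m (Suc t) = 2 * 2 powr (real t - real m + 1)"
    proof -
      have "2 powr (1 + (real t - real m + 1)) = 2 powr 1 * 2 powr (real t - real m + 1)"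
        by (rule powr_add)
      moreover have "1 + (real t - real m + 1) = real (Suc t) - real m + 1" by simp
      ultimately show ?thesis using True by (simp add: gw_def)
    qed
    moreover have "2 powr (- \<bar>real t + 1 - real m\<bar>) = 2 powr (real t - real m + 1)"
      using True by (simp add: algebra_simps)
    ultimately show ?thesis using s Suc.IH by linarith
  next
    case False
    have "gw m t = 3 - 2 powr (real m - real t)"
    proof (cases "t = m")
      case True then show ?thesis by (simp add: gw_def)
    next
      case False2: False
      then show ?thesis using False by (simp add: gw_def)
    qed
    moreover have "\<bar>real t + 1 - real m\<bar> = real t + 1 - real m" using False by auto
    moreover have "gw m (Suc t) = 3 - 2 powr (real m - real t - 1)" using False
      by (simp add: gw_def algebra_simps)
    moreover have "2 powr (real m - real t) = 2 * 2 powr (real m - real t - 1)"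
    proof -
      have "2 powr (1 + (real m - real t - 1)) = 2 powr 1 * 2 powr (real m - real t - 1)"
        by (rule powr_add)
      then show ?thesis by simp
    qed
    moreover have "2 powr (- \<bar>real t + 1 - real m\<bar>) = 2 powr (real m - real t - 1)"
      using False by (simp add: algebra_simps)
    ultimately show ?thesis using s Suc.IH by linarith
  qed
qed

lemma weight_sum: "(\<Sum>i=1..t. 2 powr (- \<bar>real i - real m\<bar>)) \<le> 3"
proof -
  have "gw m t \<le> 3"
  proof (cases "t \<le> m")
    case True
    then have "2 powr (real t - real m + 1) \<le> 2 powr 1" by (intro powr_mono) auto
    then show ?thesis using True by (simp add: gw_def)
  next
    case False then show ?thesis by (simp add: gw_def)
  qed
  then show ?thesis using weight_sum_g[of m t] by linarith
qed

definition feas :: "real \<Rightarrow> nat \<Rightarrow> (nat \<Rightarrow> real) \<Rightarrow> bool" where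
  "feas \<rho> t p \<longleftrightarrow> (\<forall>i\<in>{1..t}. 0 \<le> p i \<and> p i \<le> 1) \<and> (\<Sum>i=1..t. p i) = 1 \<and> (\<Sum>i=1..t. real i * p i) = \<rho>"

definition Dm :: "real \<Rightarrow> nat \<Rightarrow> real" where
  "Dm \<rho> m = ln (dcoef m) + (\<rho> - real m) * (real m * ln 2 + ln (real m + 1))"


lemma lower_bound:
  assumes "feas \<rho> t p"
  shows "(\<Sum>i=1..t. plogpd (p i) (dcoef i)) \<ge> Dm \<rho> m - ln 2 - 2"
proof -
  define u where "u i = 2 powr (- \<bar>real i - real m\<bar>)" for i
  define s where "s = real m * ln 2 + ln (real m + 1)"
  have p: "\<And>i. i \<in> {1..t} \<Longrightarrow> 0 \<le> p i" using assms by (auto simp: feas_def)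
  have lnu: "ln (u i * dcoef i) \<ge> ln (dcoef m) + (real i - real m) * s - ln 2" for i
  proof -
    have "ln (u i * dcoef i) = ln (dcoef i) - \<bar>real i - real m\<bar> * ln 2"
      using dcoef_pos[of i] by (simp add: u_def ln_mult ln_powr)
    moreover have "(real i - real m) * (real i - real m - 1) / 2 * ln 2 \<ge> (\<bar>real i - real m\<bar> - 1) * ln 2"
      using real_ineq[of i m] by (intro mult_right_mono) auto
    moreover have "(\<bar>real i - real m\<bar> - 1) * ln 2 = \<bar>real i - real m\<bar> * ln 2 - ln 2"
      by (simp add: algebra_simps)
    ultimately show ?thesis using ln_dcoef_convex[of m i] unfolding s_def by linarith
  qed
  have "(\<Sum>i=1..t. plogpd (p i) (dcoef i)) \<ge> (\<Sum>i=1..t. p i * ln (u i * dcoef i) + p i - u i)"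
    by (intro sum_mono gibbs_term) (auto simp: p u_def dcoef_pos)
  moreover have "(\<Sum>i=1..t. p i * ln (u i * dcoef i) + p i - u i) \<ge>
      (\<Sum>i=1..t. (ln (dcoef m) - real m * s - ln 2) * p i + s * (real i * p i) + p i - u i)"
  proof (intro sum_mono)
    fix i assume i: "i \<in> {1..t}"
    have "p i * ln (u i * dcoef i) \<ge> p i * (ln (dcoef m) + (real i - real m) * s - ln 2)"
      using lnu p[OF i] by (intro mult_left_mono) auto
    then show "(ln (dcoef m) - real m * s - ln 2) * p i + s * (real i * p i) + p i - u i \<le> p i * ln (u i * dcoef i) + p i - u i"
      by (simp add: algebra_simps)
  qed
  moreover have "(\<Sum>i=1..t. (ln (dcoef m) - real m * s - ln 2) * p i + s * (real i * p i) + p i - u i)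
      = (ln (dcoef m) - real m * s - ln 2) * (\<Sum>i=1..t. p i) + s * (\<Sum>i=1..t. real i * p i) + (\<Sum>i=1..t. p i) - (\<Sum>i=1..t. u i)"
    by (simp add: sum.distrib sum_subtractf sum_distrib_left sum_distrib_right)
  moreover have "(\<Sum>i=1..t. u i) \<le> 3" unfolding u_def by (rule weight_sum)
  moreover have "(\<Sum>i=1..t. p i) = 1" "(\<Sum>i=1..t. real i * p i) = \<rho>" using assms by (auto simp: feas_def)
  ultimately show ?thesis unfolding Dm_def s_def by (simp add: algebra_simps)
qed


lemma plogpd_le: "0 \<le> p \<Longrightarrow> p \<le> 1 \<Longrightarrow> 0 < d \<Longrightarrow> plogpd p d \<le> p * ln d"
proof (cases "p = 0")
  case False
  assume "0 \<le> p" "p \<le> 1" "0 < d"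
  then have "ln p \<le> 0" "p > 0" using False by auto
  then show ?thesis using False \<open>0 < d\<close> by (simp add: plogpd_def ln_mult distrib_left mult_nonneg_nonpos)
qed (simp add: plogpd_def)

lemma upper_witness:
  assumes "1 \<le> m" "m + 1 \<le> t" "real m \<le> \<rho>" "\<rho> < real m + 1"
  shows "\<exists>p. feas \<rho> t p \<and> (\<Sum>i=1..t. plogpd (p i) (dcoef i)) \<le> Dm \<rho> m"
proof -
  define p where "p i = (if i = m then real m + 1 - \<rho> else 0) + (if i = m + 1 then \<rho> - real m else 0)" for i
  have mem: "m \<in> {1..t}" "m + 1 \<in> {1..t}" using assms by auto
  have sumg: "(\<Sum>i=1..t. p i * g i) = (real m + 1 - \<rho>) * g m + (\<rho> - real m) * g (m+1)" for g :: "nat \<Rightarrow> real"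
  proof -
    have pw: "p i * g i = (if i = m then (real m + 1 - \<rho>) * g i else 0) + (if i = m + 1 then (\<rho> - real m) * g i else 0)" for i
      unfolding p_def by (simp add: distrib_right)
    have "(\<Sum>i=1..t. p i * g i) = (\<Sum>i=1..t. (if i = m then (real m + 1 - \<rho>) * g i else 0)) + (\<Sum>i=1..t. (if i = m + 1 then (\<rho> - real m) * g i else 0))"
      unfolding pw by (rule sum.distrib)
    also have "\<dots> = (real m + 1 - \<rho>) * g m + (\<rho> - real m) * g (m+1)"
      using mem by (simp only: sum.delta finite_atLeastAtMost if_True)
    finally show ?thesis .
  qed
  have pr: "0 \<le> p i \<and> p i \<le> 1" for i using assms by (auto simp: p_def)
  have s1: "(\<Sum>i=1..t. p i) = 1" using sumg[of "\<lambda>_. 1"] by simp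
  have s2: "(\<Sum>i=1..t. real i * p i) = \<rho>" using sumg[of real] by (simp add: mult.commute algebra_simps)
  have "feas \<rho> t p" unfolding feas_def using pr s1 s2 by blast
  moreover have "(\<Sum>i=1..t. plogpd (p i) (dcoef i)) \<le> (\<Sum>i=1..t. p i * ln (dcoef i))"
    by (intro sum_mono plogpd_le) (auto simp: pr dcoef_pos)
  moreover have "ln (dcoef (m+1)) = ln (dcoef m) + (real m * ln 2 + ln (real m + 1))"
  proof -
    have f: "ln (fact (m+1) :: real) = ln (real m + 1) + ln (fact m)"
      by (simp add: ln_mult add.commute)
    have c: "real ((m+1) choose 2) * ln 2 = real (m choose 2) * ln 2 + real m * ln 2"
      unfolding real_choose2 by (simp add: field_simps)
    show ?thesis unfolding ln_dcoef using f c by linarith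
  qed
  ultimately show ?thesis using sumg[of "\<lambda>i. ln (dcoef i)"] unfolding Dm_def
    by (intro exI[of _ p]) (simp add: algebra_simps)
qed



lemma L0tilde_bounds:
  fixes \<rho> k :: real
  assumes "1 \<le> m" "m + 1 \<le> t" "real m \<le> \<rho>" "\<rho> < real m + 1"
  defines "base \<equiv> \<rho> * ln (\<rho> * k) - ln k - \<rho> + 1"
  shows "base - Dm \<rho> m \<le> L0tilde \<rho> k t" "L0tilde \<rho> k t \<le> base - Dm \<rho> m + ln 2 + 2"
proof -
  define S where "S = {\<rho> * ln (\<rho> * k) - ln k - \<rho> + 1 - (\<Sum>i=1..t. plogpd (p i) (dcoef i)) | p.
       (\<forall>i\<in>{1..t}. 0 \<le> p i \<and> p i \<le> 1) \<and> (\<Sum>i=1..t. p i) = 1 \<and> (\<Sum>i=1..t. real i * p i) = \<rho>}"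
  have L: "L0tilde \<rho> k t = Sup S" unfolding L0tilde_def S_def ..
  have S: "S = {base - (\<Sum>i=1..t. plogpd (p i) (dcoef i)) | p. feas \<rho> t p}"
    unfolding S_def base_def feas_def by (rule refl)
  have ub: "\<And>x. x \<in> S \<Longrightarrow> x \<le> base - Dm \<rho> m + ln 2 + 2"
  proof -
    fix x assume "x \<in> S"
    then obtain q where "feas \<rho> t q" "x = base - (\<Sum>i=1..t. plogpd (q i) (dcoef i))" unfolding S by blast
    then show "x \<le> base - Dm \<rho> m + ln 2 + 2" using lower_bound[of \<rho> t q m] by linarith
  qed
  obtain p where p: "feas \<rho> t p" "(\<Sum>i=1..t. plogpd (p i) (dcoef i)) \<le> Dm \<rho> m"
    using upper_witness[OF assms(1-4)] by blast
  have inS: "base - (\<Sum>i=1..t. plogpd (p i) (dcoef i)) \<in> S" unfolding S using p by blast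
  have bdd: "bdd_above S" using ub by (auto simp: bdd_above_def)
  have "base - Dm \<rho> m \<le> base - (\<Sum>i=1..t. plogpd (p i) (dcoef i))" using p by simp
  also have "\<dots> \<le> Sup S" by (rule cSup_upper[OF inS bdd])
  finally show "base - Dm \<rho> m \<le> L0tilde \<rho> k t" using L by simp
  have "Sup S \<le> base - Dm \<rho> m + ln 2 + 2" using inS ub by (intro cSup_least) auto
  then show "L0tilde \<rho> k t \<le> base - Dm \<rho> m + ln 2 + 2" using L by simp
qed



lemma ident:
  fixes L l rho a m Lam lfm lfa lm1 Ea ELam Ef Eb ln2 :: real
  assumes "ln2 \<noteq> 0" "a*ln2 = 2*(L-l) + Ea" "Lam = l + ELam" "lfa = lfm + (rho - m)*lm1 + (a-rho)*Lam + Ef"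
  shows "((a-rho-1-2/ln2)*(L-l) + (a*L - lfa + Eb - a*(a-1)/2*ln2)) - (rho*L - L + Lam - rho + 1 - (m*(m-1)/2*ln2 + lfm + (rho-m)*(m*ln2+lm1)))
     = -(a-rho+1)*ELam - Ef + Eb + Ea/ln2 - (a-rho) - 1 - (a-rho)*Ea + ln2*((a-rho)*(a-rho+1) + (rho-m)*(1-(rho-m)))/2"
proof -
  have L: "L = l + (a*ln2 - Ea)/2" using assms(2) by (simp add: field_simps)
  show ?thesis unfolding assms(3,4) L using assms(1) by (simp add: field_simps)
qed

lemma alpha0_ln2:
  fixes n :: real assumes "n > 1"
  shows "alpha0 n * ln 2 = 2 * ln n - 2 * ln (ln n) + (2 * ln (ln 2) + 2 - ln 2)"
proof -
  have L: "ln n > 0" using assms by simp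
  have "ln (ln n / ln 2) = ln (ln n) - ln (ln 2)" using L by (simp add: ln_div)
  moreover have "ln (exp 1 / 2 :: real) = 1 - ln 2" by (simp add: ln_div)
  moreover have "alpha0 n * ln 2 = 2*ln n - 2*ln(ln n/ln 2) + 2*ln(exp 1/2) + ln 2"
    unfolding alpha0_def log_def by (simp add: field_simps)
  ultimately show ?thesis by linarith
qed

lemma gchoose_bounds:
  fixes n :: real and a :: nat
  assumes "2 * (real a)^2 \<le> n" "0 < n"
  shows "real a * ln n - ln (fact a) - ln 2 \<le> ln (n gchoose a)" "ln (n gchoose a) \<le> real a * ln n - ln (fact a)"
    "n gchoose a > 0"
proof -
  define P where "P = (\<Prod>i=0..<a. n - real i)"
  have g: "n gchoose a = P / fact a" unfolding P_def by (simp add: gbinomial_prod_rev)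
  have an: "real a \<le> n"
  proof (cases "a = 0")
    case False
    then have "real a \<le> (real a)^2" by (simp add: power2_eq_square)
    then show ?thesis using assms by linarith
  qed (use assms in simp)
  have "(\<Prod>i=0..<a. n - real a) \<le> P" unfolding P_def by (intro prod_mono) (use an in auto)
  then have P1: "(n - real a)^a \<le> P" by simp
  have "P \<le> (\<Prod>i=0..<a. n)" unfolding P_def by (intro prod_mono) (use an in auto)
  then have P2: "P \<le> n^a" by simp
  have "1 + real a * (- (real a / n)) \<le> (1 + (- (real a / n)))^a"
    by (rule Bernoulli_inequality) (use an assms in auto)
  moreover have "1 + real a * (- (real a / n)) \<ge> 1/2"
    using assms by (simp add: field_simps power2_eq_square)
  ultimately have "(1 - real a / n)^a \<ge> 1/2" by simp
  then have "n^a * (1 - real a / n)^a \<ge> n^a * (1/2)" using assms by (intro mult_left_mono) auto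
  moreover have "n^a * (1 - real a / n)^a = (n - real a)^a"
    using assms by (simp add: power_mult_distrib[symmetric] field_simps)
  ultimately have P3: "n^a / 2 \<le> P" using P1 by simp
  have npos: "n^a > 0" using assms by simp
  have Ppos: "P > 0" using P3 npos by linarith
  have lnP1: "ln P \<ge> real a * ln n - ln 2"
  proof -
    have "ln (n^a / 2) \<le> ln P" using P3 npos Ppos by (subst ln_le_cancel_iff) auto
    then show ?thesis using assms by (simp add: ln_div ln_realpow)
  qed
  have lnP2: "ln P \<le> real a * ln n"
  proof -
    have "ln P \<le> ln (n^a)" using P2 npos Ppos by (subst ln_le_cancel_iff) auto
    then show ?thesis using assms by (simp add: ln_realpow)
  qed
  have lg: "ln (n gchoose a) = ln P - ln (fact a)" unfolding g using Ppos by (simp add: ln_div)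
  show "real a * ln n - ln (fact a) - ln 2 \<le> ln (n gchoose a)" using lg lnP1 by linarith
  show "ln (n gchoose a) \<le> real a * ln n - ln (fact a)" using lg lnP2 by linarith
  show "n gchoose a > 0" unfolding g using Ppos by simp
qed

lemma ln_mu:
  assumes "(n gchoose a) > 0"
  shows "ln (mu a n) = ln (n gchoose a) - real a * (real a - 1) / 2 * ln 2"
  using assms unfolding mu_def by (simp add: ln_mult real_choose2)



lemma core:
  fixes n k C1 c1 c2 :: real and a t :: nat
  defines "K \<equiv> \<bar>C1\<bar> + \<bar>2 * ln (ln 2) + 2 - ln 2\<bar>"
  and "Bd \<equiv> 2*\<bar>C1\<bar> + \<bar>c2\<bar>"
  assumes k: "0 < k" "k < n" and ta: "1 \<le> t" "t \<le> a"
   and ha: "\<bar>real a - alpha0 n\<bar> \<le> C1" and ht: "\<bar>real t - alpha0 n\<bar> \<le> C1"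
   and r2: "2 \<le> n/k" and tr: "c1 \<le> real t - n/k" "real t - n/k \<le> c2" and c1: "0 < c1"
   and N1: "3 \<le> n" and N2: "ln (ln n) \<le> ln n / 4" and N3: "4*(K+Bd) \<le> ln n" and N4: "50*(ln n)^2 \<le> n"
  shows "\<bar>L0hat n k t - ((real a - n/k - 1 - 2/ln 2) * (ln n - ln (ln n)) + ln (mu a n))\<bar>
     \<le> 2*(Bd+1) + (Bd+1)*Bd + 1 + 2*K + (Bd+1) + Bd*K + (Bd*(Bd+1) + 1) + 3"
proof -
  define \<rho> where "\<rho> = n/k"
  define L where "L = ln n"
  define l where "l = ln L"
  define \<delta> where "\<delta> = real a - \<rho>"
  define m where "m = nat \<lfloor>\<rho>\<rfloor>"
  define f where "f = \<rho> - real m"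
  define \<Lambda> where "\<Lambda> = ln \<rho>"
  define lfa where "lfa = ln (fact a :: real)"
  define lfm where "lfm = ln (fact m :: real)"
  define lm1 where "lm1 = ln (real m + 1)"
  have npos: "n > 0" using N1 by simp
  have \<rho>2: "2 \<le> \<rho>" using r2 \<rho>_def by simp
  have ln2: "2/3 \<le> ln (2::real)" "ln (2::real) \<le> 25/36" using ln2_ge_two_thirds ln2_le_25_over_36 by auto
  have \<delta>: "0 < \<delta>" "\<delta> \<le> Bd"
  proof -
    have "real t \<le> real a" using ta by simp
    moreover have "real a - real t \<le> 2 * \<bar>C1\<bar>" using ha ht by linarith
    ultimately show "0 < \<delta>" "\<delta> \<le> Bd" using tr c1 unfolding \<delta>_def \<rho>_def Bd_def by linarith+
  qed
  have fl: "0 \<le> \<lfloor>\<rho>\<rfloor>" "2 \<le> \<lfloor>\<rho>\<rfloor>" using \<rho>2 by (auto simp: le_floor_iff)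
  have rm: "real m = of_int \<lfloor>\<rho>\<rfloor>" unfolding m_def using fl by simp
  have m\<rho>: "real m \<le> \<rho>" "\<rho> < real m + 1" unfolding rm by (auto simp: of_int_floor_le real_of_int_floor_add_one_gt)
  have m1: "1 \<le> m" using fl unfolding m_def by linarith
  have "real m < real t" using m\<rho> tr c1 unfolding \<rho>_def by linarith
  then have mt: "m + 1 \<le> t" by simp
  have ma: "m + 1 \<le> a" using mt ta by simp
  have f01: "0 \<le> f" "f < 1" using m\<rho> f_def by auto
  have Lb: "\<rho> * ln (\<rho> * k) - ln k - \<rho> + 1 - Dm \<rho> m \<le> L0tilde \<rho> k t"
           "L0tilde \<rho> k t \<le> \<rho> * ln (\<rho> * k) - ln k - \<rho> + 1 - Dm \<rho> m + ln 2 + 2"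
    using L0tilde_bounds[OF m1 mt m\<rho>, of k] by auto
  have \<rho>k: "\<rho> * k = n" using k \<rho>_def by simp
  have lnk: "ln k = L - \<Lambda>"
  proof -
    have "k = n / \<rho>" using k \<rho>_def by simp
    then show ?thesis using npos \<rho>2 unfolding L_def \<Lambda>_def by (simp add: ln_div)
  qed
  define G where "G = \<rho> * L - L + \<Lambda> - \<rho> + 1 - Dm \<rho> m"
  have LG: "G \<le> L0hat n k t" "L0hat n k t \<le> G + ln 2 + 2"
    using Lb unfolding L0hat_def G_def \<rho>_def[symmetric] \<rho>k lnk L_def by auto
  have L1: "1 \<le> L"
  proof -
    have "exp 1 \<le> n" using exp_le N1 by linarith
    then have "ln (exp 1) \<le> ln n" using npos by (subst ln_le_cancel_iff) auto
    then show ?thesis unfolding L_def by simp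
  qed
  have l0: "0 \<le> l" unfolding l_def using L1 by simp
  have l4: "l \<le> L/4" using N2 unfolding l_def L_def .
  define Ea where "Ea = (real a - alpha0 n) * ln 2 + (2 * ln (ln 2) + 2 - ln 2)"
  have Ea_eq: "real a * ln 2 = 2 * (L - l) + Ea"
    using alpha0_ln2[of n] N1 unfolding Ea_def L_def l_def by (simp add: algebra_simps)
  have Ea_b: "\<bar>Ea\<bar> \<le> K"
  proof -
    have "\<bar>(real a - alpha0 n) * ln 2\<bar> = \<bar>real a - alpha0 n\<bar> * ln 2" by (simp add: abs_mult)
    also have "\<dots> \<le> \<bar>real a - alpha0 n\<bar> * 1" using ln2 by (intro mult_left_mono) auto
    finally have "\<bar>(real a - alpha0 n) * ln 2\<bar> \<le> \<bar>real a - alpha0 n\<bar> * 1" .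
    then have "\<bar>(real a - alpha0 n) * ln 2\<bar> \<le> \<bar>real a - alpha0 n\<bar>" by simp
    then have "\<bar>(real a - alpha0 n) * ln 2\<bar> \<le> \<bar>C1\<bar>" using ha abs_ge_self[of C1] by linarith
    then show ?thesis unfolding Ea_def K_def
      using abs_triangle_ineq[of "(real a - alpha0 n) * ln 2" "2 * ln (ln 2) + 2 - ln 2"] by linarith
  qed
  have Ea_b2: "-K \<le> Ea" "Ea \<le> K" using Ea_b by (auto simp: abs_le_iff)
  have KB: "K + Bd \<le> L/4" using N3 unfolding L_def by simp
  have K0: "0 \<le> K" unfolding K_def by simp
  have \<rho>ln2: "\<rho> * ln 2 = 2 * L - 2 * l + Ea - \<delta> * ln 2" using Ea_eq unfolding \<delta>_def by (simp add: algebra_simps)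
  have dl: "0 \<le> \<delta> * ln 2" "\<delta> * ln 2 \<le> Bd"
  proof -
    show "0 \<le> \<delta> * ln 2" using \<delta> by simp
    have "\<delta> * ln 2 \<le> \<delta>" using \<delta> ln2 by (intro mult_left_le) auto
    then show "\<delta> * ln 2 \<le> Bd" using \<delta> by linarith
  qed
  have \<rho>L: "L \<le> \<rho>" "\<rho> \<le> 4 * L"
  proof -
    have a1: "\<rho> * ln 2 \<ge> L" using \<rho>ln2 l4 KB Ea_b2 dl K0 L1 by linarith
    have "\<rho> * ln 2 \<le> \<rho>" using \<rho>2 ln2 by (intro mult_left_le) auto
    then show "L \<le> \<rho>" using a1 by simp
    have "\<rho> * (2/3) \<le> \<rho> * ln 2" using \<rho>2 ln2 by (intro mult_left_mono) auto
    moreover have "\<rho> * ln 2 \<le> 9/4 * L" using \<rho>ln2 l0 KB Ea_b2 dl L1 by linarith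
    ultimately show "\<rho> \<le> 4 * L" using L1 by linarith
  qed
  define EL where "EL = \<Lambda> - l"
  have EL_b: "0 \<le> EL" "EL \<le> 2"
  proof -
    have "ln L \<le> ln \<rho>" using \<rho>L L1 by (subst ln_le_cancel_iff) auto
    then show "0 \<le> EL" unfolding EL_def l_def \<Lambda>_def by simp
    have "ln \<rho> \<le> ln (4 * L)" using \<rho>L L1 \<rho>2 by (subst ln_le_cancel_iff) auto
    also have "\<dots> = 2 * ln 2 + ln L"
    proof -
      have "ln ((2::real)^2) = real 2 * ln 2" by (rule ln_realpow)
      then have "ln (4::real) = 2 * ln 2" by simp
      then show ?thesis using L1 by (simp add: ln_mult)
    qed
    finally show "EL \<le> 2" unfolding EL_def l_def \<Lambda>_def using ln2 by linarith
  qed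
  have a5: "real a \<le> 5 * L" using \<rho>L \<delta> KB K0 unfolding \<delta>_def by linarith
  have "(real a)^2 \<le> (5 * L)^2" using a5 by (intro power_mono) auto
  then have a2n: "2 * (real a)^2 \<le> n" using N4 unfolding L_def by (simp add: power_mult_distrib)
  note gb = gchoose_bounds[OF a2n npos]
  define Eb where "Eb = ln (n gchoose a) - (real a * L - lfa)"
  have Eb_b: "- ln 2 \<le> Eb" "Eb \<le> 0" using gb unfolding Eb_def L_def lfa_def by auto
  have lmu: "ln (mu a n) = real a * L - lfa + Eb - real a * (real a - 1) / 2 * ln 2"
    using ln_mu[OF gb(3)] unfolding Eb_def by simp
  define Ef where "Ef = lfa - lfm - f * lm1 - \<delta> * \<Lambda>"
  have am: "real a - real m = \<delta> + f" unfolding \<delta>_def f_def by simp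
  have h1: "(\<delta> + f) * lm1 \<le> lfa - lfm" using ln_fact_convex[of a m] am unfolding lfa_def lfm_def lm1_def by simp
  have h2: "lfa - lfm \<le> (\<delta> + f) * ln (real a)"
  proof -
    have "fact (m + (a - m)) \<le> fact m * (m + (a - m))^(a - m)" by (rule fact_hi)
    then have "fact a \<le> fact m * a^(a - m)" using ma by simp
    then have "real (fact a) \<le> real (fact m * a^(a - m))" by (simp only: of_nat_le_iff)
    then have "(fact a :: real) \<le> fact m * real a^(a - m)" by simp
    then have "ln (fact a :: real) \<le> ln (fact m * real a^(a - m))" using ma by (subst ln_le_cancel_iff) auto
    also have "\<dots> = ln (fact m) + real (a - m) * ln (real a)" using ma by (simp add: ln_mult ln_realpow)
    finally show ?thesis unfolding lfa_def lfm_def using am ma by (simp add: of_nat_diff)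
  qed
  have \<Lambda>lm1: "\<Lambda> \<le> lm1" unfolding \<Lambda>_def lm1_def using m\<rho> \<rho>2 by (subst ln_le_cancel_iff) auto
  have lnaB: "ln (real a) \<le> \<Lambda> + Bd/2"
  proof -
    have "ln (real a / \<rho>) \<le> real a / \<rho> - 1" using \<rho>2 \<delta> unfolding \<delta>_def by (intro ln_le_minus_one) auto
    moreover have "real a / \<rho> - 1 = \<delta> / \<rho>" using \<rho>2 unfolding \<delta>_def by (simp add: field_simps)
    moreover have "\<delta> / \<rho> \<le> \<delta> / 2" using \<rho>2 \<delta> by (intro divide_left_mono) auto
    moreover have "ln (real a / \<rho>) = ln (real a) - \<Lambda>" unfolding \<Lambda>_def using \<rho>2 \<delta> unfolding \<delta>_def by (simp add: ln_div)
    ultimately show ?thesis using \<delta> by linarith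
  qed
  have Ef_b: "0 \<le> Ef" "Ef \<le> (Bd+1)*Bd"
  proof -
    have e1: "(\<delta> + f) * lm1 = \<delta> * lm1 + f * lm1" by (simp add: distrib_right)
    have e2: "\<delta> * \<Lambda> \<le> \<delta> * lm1" using \<Lambda>lm1 \<delta> by (intro mult_left_mono) auto
    show "0 \<le> Ef" unfolding Ef_def using h1 e1 e2 by linarith
    have e3: "(\<delta> + f) * ln (real a) \<le> (\<delta> + f) * (\<Lambda> + Bd/2)" using lnaB \<delta> f01 by (intro mult_left_mono) auto
    have e4: "(\<delta> + f) * (\<Lambda> + Bd/2) = \<delta> * \<Lambda> + f * \<Lambda> + (\<delta> + f) * (Bd/2)" by (simp add: algebra_simps)
    have e5: "f * \<Lambda> \<le> f * lm1" using \<Lambda>lm1 f01 by (intro mult_left_mono) auto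
    have e6: "(\<delta> + f) * (Bd/2) \<le> (Bd + 1) * Bd" using \<delta> f01
      by (intro mult_mono) auto
    show "Ef \<le> (Bd+1)*Bd" unfolding Ef_def using h2 e3 e4 e5 e6 by linarith
  qed
  have Dm_eq: "Dm \<rho> m = real m * (real m - 1) / 2 * ln 2 + lfm + (\<rho> - real m) * (real m * ln 2 + lm1)"
    unfolding Dm_def ln_dcoef real_choose2 lfm_def lm1_def by simp
  define R where "R = -(real a-\<rho>+1)*EL - Ef + Eb + Ea/ln 2 - (real a-\<rho>) - 1 - (real a-\<rho>)*Ea
      + ln 2*((real a-\<rho>)*(real a-\<rho>+1) + (\<rho>-real m)*(1-(\<rho>-real m)))/2"
  have id: "((real a-\<rho>-1-2/ln 2)*(L-l) + (real a*L - lfa + Eb - real a*(real a-1)/2*ln 2))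
     - (\<rho>*L - L + \<Lambda> - \<rho> + 1 - (real m*(real m-1)/2*ln 2 + lfm + (\<rho>-real m)*(real m*ln 2+lm1))) = R"
    unfolding R_def
    by (rule ident) (use Ea_eq in \<open>auto simp: EL_def Ef_def f_def \<delta>_def\<close>)
  have TG: "((real a - n/k - 1 - 2/ln 2) * (ln n - ln (ln n)) + ln (mu a n)) - G = R"
    using id unfolding lmu G_def Dm_eq \<rho>_def[symmetric] L_def[symmetric] l_def[symmetric] by simp
  have r1: "\<bar>(real a-\<rho>+1)*EL\<bar> \<le> (Bd+1)*2"
    unfolding abs_mult using \<delta> EL_b unfolding \<delta>_def by (intro mult_mono) auto
  have r4: "\<bar>Ea/ln 2\<bar> \<le> 2*K"
  proof -
    have "\<bar>Ea/ln 2\<bar> = \<bar>Ea\<bar> * (1/ln 2)" by (simp add: abs_div)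
    also have "\<dots> \<le> K * 2" using Ea_b ln2 K0 by (intro mult_mono) (auto simp: field_simps)
    finally show ?thesis by simp
  qed
  have r6: "\<bar>(real a-\<rho>)*Ea\<bar> \<le> Bd*K"
    unfolding abs_mult using \<delta> Ea_b unfolding \<delta>_def by (intro mult_mono) auto
  have r7: "\<bar>ln 2*((real a-\<rho>)*(real a-\<rho>+1) + (\<rho>-real m)*(1-(\<rho>-real m)))/2\<bar> \<le> Bd*(Bd+1) + 1"
  proof -
    have q1: "0 \<le> (real a-\<rho>)*(real a-\<rho>+1)" "(real a-\<rho>)*(real a-\<rho>+1) \<le> Bd*(Bd+1)"
      using \<delta> unfolding \<delta>_def by (auto intro: mult_mono)
    have q2: "0 \<le> (\<rho>-real m)*(1-(\<rho>-real m))" "(\<rho>-real m)*(1-(\<rho>-real m)) \<le> 1"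
      using f01 unfolding f_def by (auto intro: mult_le_one)
    have "0 \<le> ln 2*((real a-\<rho>)*(real a-\<rho>+1) + (\<rho>-real m)*(1-(\<rho>-real m)))" using q1 q2 by simp
    moreover have "ln 2*((real a-\<rho>)*(real a-\<rho>+1) + (\<rho>-real m)*(1-(\<rho>-real m))) \<le> 1 * (Bd*(Bd+1) + 1)"
      using q1 q2 ln2 by (intro mult_mono) auto
    then have "ln 2*((real a-\<rho>)*(real a-\<rho>+1) + (\<rho>-real m)*(1-(\<rho>-real m))) \<le> Bd*(Bd+1) + 1" by simp
    ultimately show ?thesis by simp
  qed
  have R_eq: "R = -((real a-\<rho>+1)*EL) - Ef + Eb + Ea/ln 2 - (real a-\<rho>) - 1 - (real a-\<rho>)*Ea
      + ln 2*((real a-\<rho>)*(real a-\<rho>+1) + (\<rho>-real m)*(1-(\<rho>-real m)))/2"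
    unfolding R_def by (simp add: algebra_simps)
  have R_b1: "R \<le> 2*(Bd+1) + (Bd+1)*Bd + 1 + 2*K + (Bd+1) + Bd*K + (Bd*(Bd+1) + 1)"
    using R_eq abs_le_D2[OF r1] abs_le_D1[OF r4] abs_le_D2[OF r6] abs_le_D1[OF r7] Ef_b Eb_b ln2 \<delta>
    unfolding \<delta>_def by linarith
  have R_b2: "-R \<le> 2*(Bd+1) + (Bd+1)*Bd + 1 + 2*K + (Bd+1) + Bd*K + (Bd*(Bd+1) + 1)"
    using R_eq abs_le_D1[OF r1] abs_le_D2[OF r4] abs_le_D1[OF r6] abs_le_D2[OF r7] Ef_b Eb_b ln2 \<delta>
    unfolding \<delta>_def by linarith
  show ?thesis using TG LG R_b1 R_b2 ln2 by (intro abs_leI) linarith+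
qed



theorem lemma39:
  fixes C1 c1 c2 :: real
  assumes "0 < c1" and "c1 \<le> c2"
  shows "\<exists>C N. \<forall>(n::real) (k::real) (a::nat) (t::nat).
     0 < k \<and> k < n \<and> 1 \<le> t \<and> t \<le> a \<and> n \<ge> N \<and>
     \<bar>real a - alpha0 n\<bar> \<le> C1 \<and> \<bar>real t - alpha0 n\<bar> \<le> C1 \<and>
     2 \<le> n / k \<and> c1 \<le> real t - n / k \<and> real t - n / k \<le> c2 \<longrightarrow>
     \<bar>L0hat n k t - ((real a - n / k - 1 - 2 / ln 2) * (ln n - ln (ln n)) + ln (mu a n))\<bar> \<le> C"
proof -
  define K where "K = \<bar>C1\<bar> + \<bar>2 * ln (ln 2) + 2 - ln 2\<bar>"
  define Bd where "Bd = 2*\<bar>C1\<bar> + \<bar>c2\<bar>"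
  have e1: "eventually (\<lambda>n::real. 3 \<le> n) at_top" by (rule eventually_ge_at_top)
  have e2: "eventually (\<lambda>n::real. ln (ln n) \<le> ln n / 4) at_top" by real_asymp
  have e3: "eventually (\<lambda>n::real. 4*(K+Bd) \<le> ln n) at_top"
    using ln_at_top unfolding filterlim_at_top by blast
  have e4: "eventually (\<lambda>n::real. 50*(ln n)^2 \<le> n) at_top" by real_asymp
  have "eventually (\<lambda>n::real. 3 \<le> n \<and> ln (ln n) \<le> ln n / 4 \<and> 4*(K+Bd) \<le> ln n \<and> 50*(ln n)^2 \<le> n) at_top"
    using eventually_conj[OF e1 eventually_conj[OF e2 eventually_conj[OF e3 e4]]] by simp
  then obtain N where N: "\<And>n. n \<ge> N \<Longrightarrow> 3 \<le> n \<and> ln (ln n) \<le> ln n / 4 \<and> 4*(K+Bd) \<le> ln n \<and> 50*(ln n)^2 \<le> n"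
    unfolding eventually_at_top_linorder by blast
  define CC where "CC = 2*(Bd+1) + (Bd+1)*Bd + 1 + 2*K + (Bd+1) + Bd*K + (Bd*(Bd+1) + 1) + 3"
  have main: "\<bar>L0hat n k t - ((real a - n / k - 1 - 2 / ln 2) * (ln n - ln (ln n)) + ln (mu a n))\<bar> \<le> CC"
    if h: "0 < k \<and> k < n \<and> 1 \<le> t \<and> t \<le> a \<and> n \<ge> N \<and>
     \<bar>real a - alpha0 n\<bar> \<le> C1 \<and> \<bar>real t - alpha0 n\<bar> \<le> C1 \<and>
     2 \<le> n / k \<and> c1 \<le> real t - n / k \<and> real t - n / k \<le> c2" for n k :: real and a t :: nat
  proof -
    have NN: "3 \<le> n" "ln (ln n) \<le> ln n / 4" "4*(K+Bd) \<le> ln n" "50*(ln n)^2 \<le> n" using N h by auto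
    show ?thesis
      using core[of k n t a C1 c1 c2] h NN assms unfolding K_def Bd_def CC_def by blast
  qed
  show ?thesis using main by blast
qed

end
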